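(* Let $(X,\phi)$ be a uniformly Lipschitz flow on a metric space $(X,d)$. Then for every non-empty subset $Z\subset X$, $$\overline{\mathrm{mdim}}^B(\phi,Z,d)=\overline{\mathrm{mdim}}^B(\phi_1,Z,d).$$
   Context: A flow: $\phi:X\times\mathbb{R}\to X$ continuous, $\phi_t(x)=\phi(x,t)$, $\phi_0=\mathrm{id}$, $\phi_{t+s}=\phi_t\circ\phi_s$. Uniformly Lipschitz: for every $t_0>0$ there is $L(t_0)>0$ such that for all $\epsilon>0$ and $x,y\in X$, $d(x,y)\le\epsilon/L(t_0)$ implies $d(\phi_sx,\phi_sy)<\epsilon$ for all $s\in[0,t_0]$. Balls: $B_n(x,\epsilon,\phi)=\{y:d(\phi_sx,\phi_sy)<\epsilon\ \forall s\in[0,n]\}$ and $B_n(x,\epsilon,\phi_1)=\{y:d(\phi_jx,\phi_jy)<\epsilon,\ j=0,\dots,n-1\}$. Bowen upper metric mean dimension: for $\lambda\in\mathbb{R}$, $N\in\mathbb{N}$, $\epsilon>0$, $M(\phi,d,Z,\lambda,N,\epsilon)=\inf\sum_{i\in I}e^{-n_i\lambda}$ over finite or countable families $\{B_{n_i}(x_i,\epsilon,\phi)\}_{i\in I}$ covering $Z$ with integers $n_i\ge N$; $M(\phi,d,Z,\lambda,\epsilon)=\lim_{N\to\infty}M(\phi,d,Z,\lambda,N,\epsilon)$; $M(\phi,d,Z,\epsilon)=\inf\{\lambda:M(\phi,d,Z,\lambda,\epsilon)=0\}$; $\overline{\mathrm{mdim}}^B(\phi,Z,d)=\limsup_{\epsilon\to0}\frac{M(\phi,d,Z,\epsilon)}{\log(1/\epsilon)}$.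 The quantity $\overline{\mathrm{mdim}}^B(\phi_1,Z,d)$ is defined identically with $B_{n_i}(x_i,\epsilon,\phi)$ replaced by $B_{n_i}(x_i,\epsilon,\phi_1)$. *)

theory Defs
  imports "HOL-Analysis.Analysis" "HOL-Library.Extended_Real" "HOL-Library.Extended_Nonnegative_Real"
begin

definition is_flow :: "('a::metric_space \<Rightarrow> real \<Rightarrow> 'a) \<Rightarrow> bool" where
  "is_flow phi \<longleftrightarrow> continuous_on UNIV (\<lambda>(x, t). phi x t)
     \<and> (\<forall>x. phi x 0 = x)
     \<and> (\<forall>x t s. phi x (t + s) = phi (phi x s) t)"

definition uniformly_lipschitz_flow :: "('a::metric_space \<Rightarrow> real \<Rightarrow> 'a) \<Rightarrow> bool" where
  "uniformly_lipschitz_flow phi \<longleftrightarrow>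
     (\<forall>t0>0. \<exists>L>0. \<forall>\<epsilon>>0. \<forall>x y. dist x y \<le> \<epsilon> / L \<longrightarrow>
        (\<forall>s\<in>{0..t0}. dist (phi x s) (phi y s) < \<epsilon>))"

definition flow_bowen_ball :: "('a::metric_space \<Rightarrow> real \<Rightarrow> 'a) \<Rightarrow> nat \<Rightarrow> 'a \<Rightarrow> real \<Rightarrow> 'a set" where
  "flow_bowen_ball phi n x \<epsilon> = {y. \<forall>s\<in>{0..real n}. dist (phi x s) (phi y s) < \<epsilon>}"

definition map_bowen_ball :: "('a::metric_space \<Rightarrow> 'a) \<Rightarrow> nat \<Rightarrow> 'a \<Rightarrow> real \<Rightarrow> 'a set" where
  "map_bowen_ball f n x \<epsilon> = {y. \<forall>j<n. dist ((f ^^ j) x) ((f ^^ j) y) < \<epsilon>}"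

text \<open>Generic Caratheodory-type construction for a family of balls B n x eps.
  Finite or countable covers are indexed by a set I of natural numbers.\<close>
definition bowen_M_N :: "(nat \<Rightarrow> 'a \<Rightarrow> real \<Rightarrow> 'a set) \<Rightarrow> 'a set \<Rightarrow> real \<Rightarrow> nat \<Rightarrow> real \<Rightarrow> ennreal" where
  "bowen_M_N B Z lam N \<epsilon> =
     Inf {(\<Sum>\<^sub>\<infinity> i\<in>I. ennreal (exp (- real (n i) * lam))) | (I :: nat set) n x.
            (\<forall>i\<in>I. n i \<ge> N) \<and> Z \<subseteq> (\<Union>i\<in>I. B (n i) (x i) \<epsilon>)}"

definition bowen_M :: "(nat \<Rightarrow> 'a \<Rightarrow> real \<Rightarrow> 'a set) \<Rightarrow> 'a set \<Rightarrow> real \<Rightarrow> real \<Rightarrow> ennreal" where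
  "bowen_M B Z lam \<epsilon> = lim (\<lambda>N. bowen_M_N B Z lam N \<epsilon>)"

definition bowen_crit :: "(nat \<Rightarrow> 'a \<Rightarrow> real \<Rightarrow> 'a set) \<Rightarrow> 'a set \<Rightarrow> real \<Rightarrow> ereal" where
  "bowen_crit B Z \<epsilon> = Inf (ereal ` {lam. bowen_M B Z lam \<epsilon> = 0})"

definition bowen_upper_mdim :: "(nat \<Rightarrow> 'a \<Rightarrow> real \<Rightarrow> 'a set) \<Rightarrow> 'a set \<Rightarrow> ereal" where
  "bowen_upper_mdim B Z = Limsup (at_right (0::real)) (\<lambda>\<epsilon>. bowen_crit B Z \<epsilon> / ereal (ln (1 / \<epsilon>)))"

abbreviation flow_bowen_mdim :: "('a::metric_space \<Rightarrow> real \<Rightarrow> 'a) \<Rightarrow> 'a set \<Rightarrow> ereal" where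
  "flow_bowen_mdim phi Z \<equiv> bowen_upper_mdim (flow_bowen_ball phi) Z"

abbreviation time_one_bowen_mdim :: "('a::metric_space \<Rightarrow> real \<Rightarrow> 'a) \<Rightarrow> 'a set \<Rightarrow> ereal" where
  "time_one_bowen_mdim phi Z \<equiv> bowen_upper_mdim (map_bowen_ball (\<lambda>x. phi x 1)) Z"

end

theory Submission
  imports Defs
begin

lemma M_N_mono:
  fixes B B' :: "nat \<Rightarrow> 'a \<Rightarrow> real \<Rightarrow> 'a set"
  assumes "\<And>n x. n \<ge> N \<Longrightarrow> B n x e \<subseteq> B' n x e'"
  shows "bowen_M_N B' Z lam N e' \<le> bowen_M_N B Z lam N e"
  unfolding bowen_M_N_def
  apply (rule Inf_superset_mono)
  apply clarify
  subgoal for y I n x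
    apply (rule exI[where x=I], rule exI[where x=n], rule exI[where x=x])
    using assms by blast
  done

lemma M_N_incseq: "incseq (\<lambda>N. bowen_M_N B Z lam N e)"
  unfolding incseq_def bowen_M_N_def
  by (intro allI impI Inf_superset_mono) (auto, fastforce)

lemma M_eq_SUP: "bowen_M B Z lam e = (SUP N. bowen_M_N B Z lam N e)"
  unfolding bowen_M_def using LIMSEQ_SUP[OF M_N_incseq] by (rule limI)

lemma M_mono:
  fixes B B' :: "nat \<Rightarrow> 'a \<Rightarrow> real \<Rightarrow> 'a set"
  assumes "\<And>n x. n \<ge> 1 \<Longrightarrow> B n x e \<subseteq> B' n x e'"
  shows "bowen_M B' Z lam e' \<le> bowen_M B Z lam e"
  unfolding M_eq_SUP
proof (rule SUP_least)
  fix N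
  have "bowen_M_N B' Z lam N e' \<le> bowen_M_N B' Z lam (Suc N) e'"
    using M_N_incseq[of B' Z lam e'] by (simp add: incseq_def)
  also have "\<dots> \<le> bowen_M_N B Z lam (Suc N) e"
    by (rule M_N_mono) (use assms in auto)
  also have "\<dots> \<le> (SUP N. bowen_M_N B Z lam N e)" by (rule SUP_upper) simp
  finally show "bowen_M_N B' Z lam N e' \<le> (SUP N. bowen_M_N B Z lam N e)" .
qed

lemma crit_mono:
  fixes B B' :: "nat \<Rightarrow> 'a \<Rightarrow> real \<Rightarrow> 'a set"
  assumes "\<And>n x. n \<ge> 1 \<Longrightarrow> B n x e \<subseteq> B' n x e'"
  shows "bowen_crit B' Z e' \<le> bowen_crit B Z e"
  unfolding bowen_crit_def
proof (rule Inf_superset_mono, rule image_mono, safe)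
  fix lam assume "bowen_M B Z lam e = 0"
  then show "bowen_M B' Z lam e' = 0" using M_mono[of B e B' e' Z lam] assms by simp
qed

lemma crit_nonneg:
  assumes "Z \<noteq> {}"
  shows "bowen_crit B Z e \<ge> 0"
  unfolding bowen_crit_def
proof (rule Inf_greatest, safe)
  fix lam assume M0: "bowen_M B Z lam e = 0"
  show "0 \<le> ereal lam"
  proof (rule ccontr)
    assume "\<not> 0 \<le> ereal lam"
    then have lam: "lam \<le> 0" by simp
    have "1 \<le> bowen_M_N B Z lam 0 e"
      unfolding bowen_M_N_def
    proof (rule Inf_greatest, safe)
      fix I :: "nat set" and n x
      assume h: "Z \<subseteq> (\<Union>i\<in>I. B (n i) (x i) e)"
      obtain z where "z \<in> Z" using assms by blast
      with h obtain i where i: "i \<in> I" by blast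
      have "ennreal 1 \<le> ennreal (exp (- real (n i) * lam))"
        using lam by (intro ennreal_leI) (simp add: mult_nonneg_nonpos)
      also have "\<dots> = (\<Sum>\<^sub>\<infinity>j\<in>{i}. ennreal (exp (- real (n j) * lam)))" by simp
      also have "\<dots> \<le> (\<Sum>\<^sub>\<infinity>j\<in>I. ennreal (exp (- real (n j) * lam)))"
        by (rule infsum_mono_neutral) (use i in \<open>auto simp: nonneg_summable_on_complete\<close>)
      finally show "1 \<le> (\<Sum>\<^sub>\<infinity>j\<in>I. ennreal (exp (- real (n j) * lam)))" by simp
    qed
    also have "\<dots> \<le> bowen_M B Z lam e" unfolding M_eq_SUP by (rule SUP_upper) simp
    finally show False using M0 by simp
  qed
qed


lemma iter_phi:
  assumes "is_flow phi"
  shows "((\<lambda>x. phi x 1) ^^ j) x = phi x (real j)"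
proof (induction j)
  case 0 then show ?case using assms by (simp add: is_flow_def)
next
  case (Suc j)
  have "phi x (1 + real j) = phi (phi x (real j)) 1" using assms by (simp add: is_flow_def)
  then show ?case using Suc by (simp add: add.commute)
qed

lemma ball1:
  assumes "is_flow phi"
  shows "flow_bowen_ball phi n x e \<subseteq> map_bowen_ball (\<lambda>x. phi x 1) n x e"
  unfolding flow_bowen_ball_def map_bowen_ball_def iter_phi[OF assms]
  by auto

lemma ball2:
  assumes fl: "is_flow phi" and L: "L > 0"
    and H: "\<forall>e>0. \<forall>x y. dist x y \<le> e / L \<longrightarrow> (\<forall>s\<in>{0..1}. dist (phi x s) (phi y s) < e)"
    and e: "e > 0" and n: "n \<ge> 1"
  shows "map_bowen_ball (\<lambda>x. phi x 1) n x (e / L) \<subseteq> flow_bowen_ball phi n x e"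
proof
  fix y assume y: "y \<in> map_bowen_ball (\<lambda>x. phi x 1) n x (e / L)"
  show "y \<in> flow_bowen_ball phi n x e"
    unfolding flow_bowen_ball_def
  proof safe
    fix s assume s: "s \<in> {0..real n}"
    define j where "j = min (nat \<lfloor>s\<rfloor>) (n - 1)"
    have jn: "j < n" using n unfolding j_def by auto
    have j0: "real j \<le> real (nat \<lfloor>s\<rfloor>)" unfolding j_def by simp
    have fl0: "\<lfloor>s\<rfloor> \<ge> 0" using s by simp
    then have "real (nat \<lfloor>s\<rfloor>) = of_int \<lfloor>s\<rfloor>" by simp
    then have "real (nat \<lfloor>s\<rfloor>) \<le> s" using of_int_floor_le[of s] by linarith
    then have j1: "real j \<le> s" using j0 by linarith
    have j2: "s \<le> real j + 1"
    proof (cases "nat \<lfloor>s\<rfloor> \<le> n - 1")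
      case True
      then have "j = nat \<lfloor>s\<rfloor>" unfolding j_def by simp
      then show ?thesis using s by linarith
    next
      case False
      then have "j = n - 1" unfolding j_def by simp
      then show ?thesis using s n by (simp add: of_nat_diff)
    qed
    have "dist (((\<lambda>x. phi x 1) ^^ j) x) (((\<lambda>x. phi x 1) ^^ j) y) < e / L"
      using y jn unfolding map_bowen_ball_def by auto
    then have d: "dist (phi x (real j)) (phi y (real j)) \<le> e / L"
      unfolding iter_phi[OF fl] by simp
    have "dist (phi (phi x (real j)) (s - real j)) (phi (phi y (real j)) (s - real j)) < e"
      using H e d j1 j2 by auto
    moreover have "phi (phi z (real j)) (s - real j) = phi z s" for z
      using fl unfolding is_flow_def by (metis diff_add_cancel)
    ultimately show "dist (phi x s) (phi y s) < e" by simp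
  qed
qed

lemma ratio_ineq:
  fixes c :: ereal and a b d :: real
  assumes "c \<ge> 0" "a > 0" "b > 0" "b \<le> (1 + d) * a" "d > 0"
  shows "c / ereal a \<le> ereal (1 + d) * (c / ereal b)"
proof (cases c)
  case (real r)
  then have r: "r \<ge> 0" using assms by simp
  have "r / a \<le> (1 + d) * (r / b)"
  proof -
    have "r * b \<le> r * ((1 + d) * a)" using r assms by (intro mult_left_mono) auto
    then show ?thesis using assms by (simp add: field_simps)
  qed
  then show ?thesis using real assms by simp
next
  case PInf
  then show ?thesis using assms by simp
next
  case MInf
  then show ?thesis using assms by simp
qed

lemma ereal_eps_le:
  fixes x y :: ereal
  assumes "\<And>d. d > 0 \<Longrightarrow> x \<le> ereal (1 + d) * y"
  shows "x \<le> y"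
proof (cases y)
  case PInf then show ?thesis by simp
next
  case MInf then show ?thesis using assms[of 1] by simp
next
  case (real r)
  have x2: "x \<le> ereal (2 * r)" using assms[of 1] real by simp
  show ?thesis
  proof (cases x)
    case PInf then show ?thesis using x2 by simp
  next
    case MInf then show ?thesis by simp
  next
    case (real q)
    have h: "q \<le> (1 + d) * r" if "d > 0" for d using assms[OF that] real \<open>y = ereal r\<close> by simp
    have "q \<le> r"
    proof (cases "r > 0")
      case True
      show ?thesis
      proof (rule field_le_epsilon)
        fix t :: real assume t: "t > 0"
        have "q \<le> (1 + t / r) * r" using h[of "t / r"] t True by simp
        also have "\<dots> = r + t" using True by (simp add: field_simps)
        finally show "q \<le> r + t" .
      qed
    next
      case False
      then show ?thesis using h[of 1] by simp
    qed
    then show ?thesis using real \<open>y = ereal r\<close> by simp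
  qed
qed

theorem proposition2p11:
  fixes phi :: "'a::metric_space \<Rightarrow> real \<Rightarrow> 'a" and Z :: "'a set"
  assumes "is_flow phi" and "uniformly_lipschitz_flow phi" and "Z \<noteq> {}"
  shows "flow_bowen_mdim phi Z = time_one_bowen_mdim phi Z"
proof -
  define F where "F = flow_bowen_ball phi"
  define M where "M = map_bowen_ball (\<lambda>x. phi x 1)"
  obtain L0 where L0: "L0 > 0"
    "\<forall>e>0. \<forall>x y. dist x y \<le> e / L0 \<longrightarrow> (\<forall>s\<in>{0..1}. dist (phi x s) (phi y s) < e)"
    using assms(2) unfolding uniformly_lipschitz_flow_def by (meson zero_less_one)
  define L where "L = max L0 1"
  have L1: "L \<ge> 1" unfolding L_def by simp
  have LH: "\<forall>e>0. \<forall>x y. dist x y \<le> e / L \<longrightarrow> (\<forall>s\<in>{0..1}. dist (phi x s) (phi y s) < e)"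
  proof (intro allI impI)
    fix e :: real and x y :: 'a assume e: "e > 0" and d: "dist x y \<le> e / L"
    have "e / L \<le> e / L0" using e L0(1) unfolding L_def by (intro divide_left_mono) auto
    then show "\<forall>s\<in>{0..1}. dist (phi x s) (phi y s) < e" using L0(2) e d by auto
  qed
  have cM_le: "bowen_crit M Z e \<le> bowen_crit F Z e" for e
    unfolding M_def F_def by (rule crit_mono) (rule ball1[OF assms(1)])
  have cF_le: "bowen_crit F Z e \<le> bowen_crit M Z (inverse L * e)" if "e > 0" for e
  proof -
    have "bowen_crit F Z e \<le> bowen_crit M Z (e / L)"
      unfolding M_def F_def by (rule crit_mono) (rule ball2[OF assms(1) _ LH that], use L1 in auto)
    then show ?thesis by (simp add: field_simps)
  qed
  have nn: "bowen_crit M Z e \<ge> 0" for e by (rule crit_nonneg[OF assms(3)])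
  define gF where "gF = (\<lambda>e. bowen_crit F Z e / ereal (ln (1 / e)))"
  define gM where "gM = (\<lambda>e. bowen_crit M Z e / ereal (ln (1 / e)))"
  have A: "Limsup (at_right 0) gM \<le> Limsup (at_right 0) gF"
  proof (rule Limsup_mono)
    show "\<forall>\<^sub>F e in at_right 0. gM e \<le> gF e"
      using eventually_at_right_real[OF zero_less_one]
    proof (rule eventually_mono)
      fix e :: real assume "e \<in> {0<..<1}"
      then have "ln (1 / e) > 0" by simp
      then show "gM e \<le> gF e" unfolding gM_def gF_def using cM_le[of e] by simp
    qed
  qed
  have B: "Limsup (at_right 0) gF \<le> ereal (1 + d) * Limsup (at_right 0) gM" if d: "d > 0" for d
  proof -
    define e0 where "e0 = min 1 (exp (- ln L / d))"
    have e0: "e0 > 0" unfolding e0_def by simp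
    have "Limsup (at_right 0) gF \<le> Limsup (at_right 0) (\<lambda>e. ereal (1 + d) * gM (inverse L * e))"
    proof (rule Limsup_mono)
      show "\<forall>\<^sub>F e in at_right 0. gF e \<le> ereal (1 + d) * gM (inverse L * e)"
        using eventually_at_right_real[OF e0]
      proof (rule eventually_mono)
        fix e :: real assume e: "e \<in> {0<..<e0}"
        then have e1: "e > 0" "e < 1" "e < exp (- ln L / d)" unfolding e0_def by auto
        have a: "ln (1 / e) > 0" using e1 by simp
        have lnL: "ln L \<ge> 0" using L1 by simp
        have b_eq: "ln (1 / (inverse L * e)) = ln L + ln (1 / e)"
          using e1 L1 by (simp add: ln_div ln_mult field_simps)
        have b: "ln (1 / (inverse L * e)) > 0" using b_eq a lnL by simp
        have "ln e < - ln L / d" using e1 by (metis exp_less_cancel_iff exp_ln)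
        then have "ln L < d * (- ln e)" using d by (simp add: field_simps)
        then have bd: "ln (1 / (inverse L * e)) \<le> (1 + d) * ln (1 / e)"
          using b_eq e1 by (simp add: ln_div algebra_simps)
        have "gF e \<le> bowen_crit M Z (inverse L * e) / ereal (ln (1 / e))"
          unfolding gF_def using cF_le[OF e1(1)] a by simp
        also have "\<dots> \<le> ereal (1 + d) * gM (inverse L * e)"
          unfolding gM_def by (rule ratio_ineq[OF nn a b bd d])
        finally show "gF e \<le> ereal (1 + d) * gM (inverse L * e)" .
      qed
    qed
    also have "\<dots> = ereal (1 + d) * Limsup (at_right 0) (\<lambda>e. gM (inverse L * e))"
      by (rule Limsup_ereal_mult_left) (use d in auto)
    also have "Limsup (at_right 0) (\<lambda>e. gM (inverse L * e)) = Limsup (at_right 0) gM"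
    proof -
      have "Limsup (filtermap (times (inverse L)) (at_right 0)) gM = Limsup (at_right 0) (\<lambda>e. gM (inverse L * e))"
        by (rule Limsup_filtermap_eq) (use L1 in \<open>auto simp: inj_def\<close>)
      moreover have "filtermap (times (inverse L)) (at_right (0::real)) = at_right 0"
        using filtermap_times_pos_at_right[of "inverse L" 0] L1 by simp
      ultimately show ?thesis by simp
    qed
    finally show ?thesis .
  qed
  have "Limsup (at_right 0) gF \<le> Limsup (at_right 0) gM"
    by (rule ereal_eps_le) (rule B)
  then have "Limsup (at_right 0) gF = Limsup (at_right 0) gM" using A by simp
  then show ?thesis unfolding bowen_upper_mdim_def gF_def gM_def F_def M_def .
qed

end
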